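(* Let $\mathcal{A}$ be a CA of radius $r$ over alphabet $Q$ and $\mu$ a complete Bernoulli measure on $Q^{\mathbb{Z}}$. Then for any word $w\in Q^*$ and any persistent word $u\in L_\mu(\mathcal{A})$ there exist positive integers $k_1,k_2$ and a strictly increasing sequence of positive integers $(n_j)_{j\ge0}$ such that for all $j\ge0$, $$\mathcal{A}^{-n_j}(u)\cap\Big(Q^{rn_j-k_1-|w|}\cdot\{w\}\cdot Q^{k_1+k_2+|u|}\cdot\{w\}\cdot Q^{rn_j-k_2-|w|}\Big)\neq\emptyset .$$
   Context: A one-dimensional cellular automaton (CA) $\mathcal{A}$ is given by a finite alphabet $Q$, a radius $r\ge 0$ and a local rule $\delta:Q^{2r+1}\to Q$; it acts on configurations $c\in Q^{\mathbb{Z}}$ by $\mathcal{A}(c)_i=\delta(c_{i-r},\dots,c_{i+r})$. The local rule also maps any word $v$ of length $m\ge 2r+1$ to the word of length $m-2r$ obtained by applying $\delta$ to each window of length $2r+1$; for a word $u$ and $n\ge0$, $\mathcal{A}^{-n}(u)$ denotes the set of words $v$ of length $|u|+2rn$ whose image under $n$ such applications is $u$. For $u\in Q^*$, $i\in\mathbb{Z}$, $[u]_i=\{c\in Q^{\mathbb{Z}}: c_i\cdots c_{i+|u|-1}=u\}$. A Bernoulli measure $\mu$ on $Q^{\mathbb{Z}}$ is given by a probability vector $(p_a)_{a\in Q}$ with $\mu([u]_i)=\prod_{a\in Q}p_a^{|u|_a}$, where $|u|_a$ is the number of occurrences of $a$ in $u$; it is complete if $p_a>0$ for all $a$. $\mathcal{A}^n\mu(U)=\mu(\mathcal{A}^{-n}(U))$.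 A word $u$ is persistent for $(\mathcal{A},\mu)$ if $\mathcal{A}^n\mu([u]_0)$ does not tend to $0$ as $n\to\infty$; $L_\mu(\mathcal{A})$ is the set of persistent words. For sets of words $X,Y$, $X\cdot Y$ denotes concatenation and $Q^m$ the set of words of length $m$. *)

theory Defs
  imports Complex_Main
begin

text \<open>Words over the alphabet are lists. A local rule of radius r is a function
  delta on words, applied only to words of length 2r+1.\<close>

definition apply_rule :: "('q list \<Rightarrow> 'q) \<Rightarrow> nat \<Rightarrow> 'q list \<Rightarrow> 'q list" where
  "apply_rule \<delta> r v = map (\<lambda>i. \<delta> (take (2*r+1) (drop i v))) [0..<length v - 2*r]"

definition preimage_words :: "('q list \<Rightarrow> 'q) \<Rightarrow> nat \<Rightarrow> nat \<Rightarrow> 'q list \<Rightarrow> 'q list set" where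
  "preimage_words \<delta> r n u =
     {v. length v = length u + 2*r*n \<and> (apply_rule \<delta> r ^^ n) v = u}"

text \<open>Bernoulli measure of a cylinder [v]_i.\<close>
definition bernoulli_word :: "('q \<Rightarrow> real) \<Rightarrow> 'q list \<Rightarrow> real" where
  "bernoulli_word p v = prod_list (map p v)"

definition complete_bernoulli :: "('q::finite \<Rightarrow> real) \<Rightarrow> bool" where
  "complete_bernoulli p \<longleftrightarrow> (\<forall>a. p a > 0) \<and> (\<Sum>a\<in>UNIV. p a) = 1"

text \<open>A^n mu([u]_0) = mu(A^{-n}([u]_0)); the preimage of the cylinder [u]_0 is the disjoint
  union of the cylinders [v]_{-rn}, v in A^{-n}(u).\<close>
definition pushforward_cyl :: "('q list \<Rightarrow> 'q) \<Rightarrow> nat \<Rightarrow> ('q \<Rightarrow> real) \<Rightarrow> nat \<Rightarrow> 'q list \<Rightarrow> real" where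
  "pushforward_cyl \<delta> r p n u = (\<Sum>v\<in>preimage_words \<delta> r n u. bernoulli_word p v)"

definition persistent :: "('q list \<Rightarrow> 'q) \<Rightarrow> nat \<Rightarrow> ('q \<Rightarrow> real) \<Rightarrow> 'q list \<Rightarrow> bool" where
  "persistent \<delta> r p u \<longleftrightarrow> \<not> ((\<lambda>n. pushforward_cyl \<delta> r p n u) \<longlonglongrightarrow> 0)"

text \<open>Q^{a} . {w} . Q^{b} . {w} . Q^{c} with integer exponents (empty if an exponent is negative).\<close>
definition pattern_set :: "int \<Rightarrow> 'q list \<Rightarrow> int \<Rightarrow> int \<Rightarrow> 'q list set" where
  "pattern_set a w b c = {x @ w @ y @ w @ z | x y z.
      int (length x) = a \<and> int (length y) = b \<and> int (length z) = c}"

end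

theory Submission imports Defs "HOL-Library.Infinite_Set" begin

lemma fin_len: "finite {v::'q::finite list. length v = n}"
  using finite_lists_length_eq[of "UNIV::'q set" n] by simp

lemma sum_split_len:
  fixes f :: "'q::finite list \<Rightarrow> real"
  shows "(\<Sum>v\<in>{v. length v = m + n}. f v) = (\<Sum>a\<in>{a. length a = m}. \<Sum>b\<in>{b. length b = n}. f (a@b))"
proof -
  have img: "{v::'q list. length v = m + n} = (\<lambda>(a,b). a@b) ` ({a. length a = m} \<times> {b. length b = n})"
  proof (rule set_eqI, rule iffI)
    fix v :: "'q list" assume "v \<in> {v. length v = m + n}"
    then have "v = (\<lambda>(a,b). a@b) (take m v, drop m v)" "(take m v, drop m v) \<in> {a. length a = m} \<times> {b. length b = n}"
      by auto
    then show "v \<in> (\<lambda>(a,b). a@b) ` ({a. length a = m} \<times> {b. length b = n})" by blast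
  qed auto
  have inj: "inj_on (\<lambda>(a,b). a@b) ({a::'q list. length a = m} \<times> {b. length b = n})"
    by (auto simp: inj_on_def)
  show ?thesis
    unfolding img sum.reindex[OF inj] sum.cartesian_product by (simp add: case_prod_unfold)
qed

lemma bw_append: "bernoulli_word p (a@b) = bernoulli_word p a * bernoulli_word p b"
  by (simp add: bernoulli_word_def)

lemma bw_nonneg: "complete_bernoulli p \<Longrightarrow> bernoulli_word p v \<ge> 0"
  unfolding bernoulli_word_def complete_bernoulli_def
  by (rule prod_list_nonneg) (auto simp: less_imp_le)

lemma sum_total:
  fixes p :: "'q::finite \<Rightarrow> real"
  assumes cb: "complete_bernoulli p"
  shows "(\<Sum>v\<in>{v::'q list. length v = n}. bernoulli_word p v) = 1"
proof (induction n)
  case 0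
  then show ?case by (simp add: bernoulli_word_def)
next
  case (Suc n)
  have one: "(\<Sum>a\<in>{a::'q list. length a = 1}. bernoulli_word p a) = 1"
  proof -
    have "{a::'q list. length a = 1} = (\<lambda>x. [x]) ` UNIV"
      by (auto simp: length_Suc_conv)
    moreover have "inj (\<lambda>x::'q. [x])" by (auto simp: inj_def)
    ultimately have "(\<Sum>a\<in>{a::'q list. length a = 1}. bernoulli_word p a) = (\<Sum>x\<in>UNIV. bernoulli_word p [x])"
      by (simp add: sum.reindex)
    also have "\<dots> = 1" using cb by (simp add: bernoulli_word_def complete_bernoulli_def)
    finally show ?thesis .
  qed
  have "(\<Sum>v\<in>{v::'q list. length v = Suc n}. bernoulli_word p v) =
        (\<Sum>a\<in>{a. length a = 1}. \<Sum>b\<in>{b. length b = n}. bernoulli_word p (a@b))"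
    using sum_split_len[of "bernoulli_word p" 1 n] by simp
  also have "\<dots> = (\<Sum>a\<in>{a::'q list. length a = 1}. bernoulli_word p a * (\<Sum>b\<in>{b::'q list. length b = n}. bernoulli_word p b))"
    by (simp add: bw_append sum_distrib_left)
  also have "\<dots> = 1" using Suc one by simp
  finally show ?case .
qed

lemma hit_sum:
  fixes p :: "'q::finite \<Rightarrow> real" and w :: "'q list"
  assumes cb: "complete_bernoulli p" and wd: "length w \<le> d"
  shows "(\<Sum>a\<in>{a::'q list. length a = c + d}. if take (length w) (drop c a) = w then bernoulli_word p a else 0) = bernoulli_word p w"
proof -
  let ?bw = "bernoulli_word p"
  have dd: "d = length w + (d - length w)" using wd by simp
  have "(\<Sum>a\<in>{a::'q list. length a = c + d}. if take (length w) (drop c a) = w then ?bw a else 0)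
     = (\<Sum>x\<in>{x::'q list. length x = c}. \<Sum>y\<in>{y::'q list. length y = d}. if take (length w) (drop c (x@y)) = w then ?bw (x@y) else 0)"
    by (rule sum_split_len)
  also have "\<dots> = (\<Sum>x\<in>{x::'q list. length x = c}. ?bw x * (\<Sum>y\<in>{y::'q list. length y = d}. if take (length w) y = w then ?bw y else 0))"
    by (auto simp: sum_distrib_left bw_append intro!: sum.cong)
  also have "(\<Sum>y\<in>{y::'q list. length y = d}. if take (length w) y = w then ?bw y else 0) = ?bw w"
  proof -
    have "(\<Sum>y\<in>{y::'q list. length y = d}. if take (length w) y = w then ?bw y else 0)
       = (\<Sum>y\<in>{y::'q list. length y = length w + (d - length w)}. if take (length w) y = w then ?bw y else 0)"
      using dd by simp
    also have "\<dots> = (\<Sum>s\<in>{s::'q list. length s = length w}. \<Sum>z\<in>{z::'q list. length z = d - length w}. if take (length w) (s@z) = w then ?bw (s@z) else 0)"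
      by (rule sum_split_len)
    also have "\<dots> = (\<Sum>s\<in>{s::'q list. length s = length w}. (if s = w then ?bw s else 0) * (\<Sum>z\<in>{z::'q list. length z = d - length w}. ?bw z))"
      by (auto simp: sum_distrib_left bw_append intro!: sum.cong)
    also have "\<dots> = (\<Sum>s\<in>{s::'q list. length s = length w}. (if s = w then ?bw s else 0))"
      using sum_total[OF cb] by simp
    also have "\<dots> = ?bw w"
      by (subst sum.delta[OF fin_len]) simp
    finally show ?thesis .
  qed
  finally show ?thesis using sum_total[OF cb] by (simp add: sum_distrib_right[symmetric])
qed

lemma miss_sum:
  fixes p :: "'q::finite \<Rightarrow> real" and w :: "'q list"
  assumes cb: "complete_bernoulli p" and wd: "length w \<le> d"
  shows "(\<Sum>a\<in>{a::'q list. length a = c + d}. if take (length w) (drop c a) \<noteq> w then bernoulli_word p a else 0) = 1 - bernoulli_word p w"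
proof -
  have "(\<Sum>a\<in>{a::'q list. length a = c + d}. if take (length w) (drop c a) \<noteq> w then bernoulli_word p a else 0)
     = (\<Sum>a\<in>{a::'q list. length a = c + d}. bernoulli_word p a - (if take (length w) (drop c a) = w then bernoulli_word p a else 0))"
    by (rule sum.cong) auto
  also have "\<dots> = 1 - bernoulli_word p w"
    by (simp add: sum_subtractf sum_total[OF cb] hit_sum[OF cb wd])
  finally show ?thesis .
qed

lemma block_bound:
  fixes p :: "'q::finite \<Rightarrow> real" and w :: "'q list"
  assumes cb: "complete_bernoulli p" and wd: "length w \<le> d"
  shows "L \<ge> c + M*d \<Longrightarrow> (\<Sum>v\<in>{v::'q list. length v = L}. if (\<forall>m<M. take (length w) (drop (c+m*d) v) \<noteq> w) then bernoulli_word p v else 0) \<le> (1 - bernoulli_word p w)^M"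
proof (induction M arbitrary: c L)
  case 0
  then show ?case using sum_total[OF cb, of L] by simp
next
  case (Suc M)
  let ?bw = "bernoulli_word p"
  let ?A = "\<lambda>a. take (length w) (drop c a) \<noteq> w"
  let ?B = "\<lambda>b. \<forall>j<M. take (length w) (drop (0+j*d) b) \<noteq> w"
  have L: "L = (c + d) + (L - (c+d))" using Suc.prems by simp
  have IH: "(\<Sum>b\<in>{b::'q list. length b = L - (c+d)}. if ?B b then ?bw b else 0) \<le> (1 - ?bw w)^M"
    using Suc.IH[of 0 "L - (c+d)"] Suc.prems by simp
  have cond: "(\<forall>m<Suc M. take (length w) (drop (c+m*d) (a@b)) \<noteq> w) = (?A a \<and> ?B b)"
    if "length a = c + d" for a b :: "'q list"
  proof -
    have h0: "take (length w) (drop c (a@b)) = take (length w) (drop c a)"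
      using that wd by simp
    have S: "drop (c + Suc j * d) (a@b) = drop (j*d) b" for j
      using that by simp
    show ?thesis
    proof
      assume H: "\<forall>m<Suc M. take (length w) (drop (c+m*d) (a@b)) \<noteq> w"
      have "take (length w) (drop (c+0*d) (a@b)) \<noteq> w" using H by blast
      then have "?A a" by (simp only: h0 mult_0 add_0_right not_False_eq_True)
      moreover have "?B b"
      proof (intro allI impI)
        fix j assume "j < M"
        then have "take (length w) (drop (c + Suc j * d) (a@b)) \<noteq> w" using H by blast
        then show "take (length w) (drop (0 + j * d) b) \<noteq> w" by (simp only: S add_0 not_False_eq_True)
      qed
      ultimately show "?A a \<and> ?B b" ..
    next
      assume H: "?A a \<and> ?B b"
      show "\<forall>m<Suc M. take (length w) (drop (c+m*d) (a@b)) \<noteq> w"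
      proof (intro allI impI)
        fix m assume m: "m < Suc M"
        show "take (length w) (drop (c+m*d) (a@b)) \<noteq> w"
        proof (cases m)
          case 0 then show ?thesis using H by (simp only: h0 mult_0 add_0_right not_False_eq_True)
        next
          case (Suc j)
          then have "j < M" using m by simp
          then have "take (length w) (drop (0 + j * d) b) \<noteq> w" using H by blast
          then show ?thesis unfolding Suc by (simp only: S add_0 not_False_eq_True)
        qed
      qed
    qed
  qed
  have "(\<Sum>v\<in>{v::'q list. length v = L}. if (\<forall>m<Suc M. take (length w) (drop (c+m*d) v) \<noteq> w) then ?bw v else 0)
    = (\<Sum>a\<in>{a::'q list. length a = c + d}. \<Sum>b\<in>{b::'q list. length b = L - (c+d)}. if (\<forall>m<Suc M. take (length w) (drop (c+m*d) (a@b)) \<noteq> w) then ?bw (a@b) else 0)"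
    by (subst L, rule sum_split_len)
  also have "\<dots> = (\<Sum>a\<in>{a::'q list. length a = c + d}. (if ?A a then ?bw a else 0) * (\<Sum>b\<in>{b::'q list. length b = L - (c+d)}. if ?B b then ?bw b else 0))"
    by (rule sum.cong[OF refl], simp only: cond mem_Collect_eq sum_distrib_left, rule sum.cong) (auto simp: bw_append)
  also have "\<dots> \<le> (\<Sum>a\<in>{a::'q list. length a = c + d}. (if ?A a then ?bw a else 0) * (1 - ?bw w)^M)"
    by (rule sum_mono, rule mult_left_mono[OF IH]) (auto simp: bw_nonneg[OF cb])
  also have "\<dots> = (1 - ?bw w) * (1 - ?bw w)^M"
    by (simp add: sum_distrib_right[symmetric] miss_sum[OF cb wd])
  finally show ?case by simp
qed

lemma bw_pos: "complete_bernoulli p \<Longrightarrow> bernoulli_word p v > 0"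
  unfolding bernoulli_word_def complete_bernoulli_def by (induction v) auto

lemma split_at:
  assumes "i + length w \<le> length v" "take (length w) (drop i v) = w"
  shows "v = take i v @ w @ drop (i + length w) v"
proof -
  have "drop i v = take (length w) (drop i v) @ drop (length w) (drop i v)" by (rule append_take_drop_id[symmetric])
  then have "drop i v = w @ drop (i + length w) v" using assms by (simp add: add.commute)
  then show ?thesis by (metis append_take_drop_id)
qed

lemma pattern_mem:
  assumes lv: "length v = length u + 2*R" and h1: "k1 + length w \<le> R" and h2: "k2 + length w \<le> R"
    and w1: "take (length w) (drop (R - k1 - length w) v) = w"
    and w2: "take (length w) (drop (R + length u + k2) v) = w"
  shows "v \<in> pattern_set (int R - int k1 - int (length w)) w (int k1 + int k2 + int (length u)) (int R - int k2 - int (length w))"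
proof -
  let ?i = "R - k1 - length w"
  define v' where "v' = drop (?i + length w) v"
  have e1: "v = take ?i v @ w @ v'"
    unfolding v'_def using split_at[OF _ w1] lv h1 by simp
  have lv': "length v' = R + length u + k1" unfolding v'_def using lv h1 by simp
  let ?j = "length u + k1 + k2"
  have "drop ?j v' = drop (R + length u + k2) v"
    unfolding v'_def using h1 by (simp add: algebra_simps)
  then have w2': "take (length w) (drop ?j v') = w" using w2 by simp
  have e2: "v' = take ?j v' @ w @ drop (?j + length w) v'"
    using split_at[OF _ w2'] lv' h2 by simp
  have "v = take ?i v @ w @ take ?j v' @ w @ drop (?j + length w) v'"
    using e1 e2 by metis
  moreover have "int (length (take ?i v)) = int R - int k1 - int (length w)" using lv h1 by simp
  moreover have "int (length (take ?j v')) = int k1 + int k2 + int (length u)" using lv' h2 by simp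
  moreover have "int (length (drop (?j + length w) v')) = int R - int k2 - int (length w)" using lv' h2 by simp
  ultimately show ?thesis unfolding pattern_set_def by blast
qed

theorem mainTheorem2:
  fixes \<delta> :: "'q::finite list \<Rightarrow> 'q" and r :: nat and p :: "'q \<Rightarrow> real"
    and w u :: "'q list"
  assumes "r \<ge> 1"
    and "complete_bernoulli p"
    and "persistent \<delta> r p u"
  shows "\<exists>(k1::nat) (k2::nat) (n::nat \<Rightarrow> nat). k1 > 0 \<and> k2 > 0 \<and> strict_mono n \<and> (\<forall>j. n j > 0) \<and>
    (\<forall>j. preimage_words \<delta> r (n j) u \<inter>
          pattern_set (int r * int (n j) - int k1 - int (length w)) w
                      (int k1 + int k2 + int (length u))
                      (int r * int (n j) - int k2 - int (length w)) \<noteq> {})"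
proof -
  note r1 = assms(1) and cb = assms(2)
  let ?bw = "bernoulli_word p"
  define f where "f n = pushforward_cyl \<delta> r p n u" for n
  define Good where "Good k1 k2 n \<longleftrightarrow> preimage_words \<delta> r n u \<inter>
          pattern_set (int r * int n - int k1 - int (length w)) w
                      (int k1 + int k2 + int (length u))
                      (int r * int n - int k2 - int (length w)) \<noteq> {}" for k1 k2 n
  have fsum: "f n = (\<Sum>v\<in>{v::'q list. length v = length u + 2*r*n}.
       if (apply_rule \<delta> r ^^ n) v = u then ?bw v else 0)" for n
  proof -
    have "preimage_words \<delta> r n u = {v \<in> {v::'q list. length v = length u + 2*r*n}. (apply_rule \<delta> r ^^ n) v = u}"
      unfolding preimage_words_def by auto
    then show ?thesis unfolding f_def pushforward_cyl_def
      by (simp only: sum.inter_filter[OF fin_len])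
  qed
  have "\<not> (f \<longlonglongrightarrow> 0)" using assms(3) unfolding persistent_def f_def by simp
  then obtain e where e: "e > 0" and ee: "\<forall>no. \<exists>n\<ge>no. \<not> norm (f n - 0) < e"
    unfolding LIMSEQ_iff by blast
  have q_pos: "?bw w > 0" using bw_pos[OF cb] .
  obtain M where M: "(1 - ?bw w)^M < e/2"
    using real_arch_pow_inv[of "e/2" "1 - ?bw w"] e q_pos by auto
  define d where "d = length w + 1"
  define N0 where "N0 = (M+1)*d + length w + 1"
  define B where "B = (M+1)*d"
  define T where "T = {n. N0 \<le> n \<and> e \<le> \<bar>f n\<bar>}"
  have infT: "infinite T"
    unfolding infinite_nat_iff_unbounded_le
  proof
    fix m
    obtain n where "n \<ge> max m N0" "\<not> norm (f n - 0) < e" using ee by blast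
    then show "\<exists>n\<ge>m. n \<in> T" unfolding T_def by auto
  qed
  have claim: "\<exists>k1\<in>{1..B}. \<exists>k2\<in>{1..B}. Good k1 k2 n" if nT: "n \<in> T" for n
  proof -
    define R where "R = r * n"
    define L where "L = length u + 2*R"
    have nN: "N0 \<le> n" and fe: "e \<le> \<bar>f n\<bar>" using nT unfolding T_def by auto
    have Rn: "R \<ge> n" unfolding R_def using r1 by simp
    have RB: "R \<ge> (M+1)*d + length w + 1" using Rn nN unfolding N0_def by simp
    define cL where "cL = R - M*d - length w"
    define cR where "cR = R + length u + d"
    let ?Lf = "\<lambda>v. \<exists>m<M. take (length w) (drop (cL + m*d) v) = w"
    let ?Rt = "\<lambda>v. \<exists>m<M. take (length w) (drop (cR + m*d) v) = w"
    let ?P = "\<lambda>v. (apply_rule \<delta> r ^^ n) v = u"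
    have wd: "length w \<le> d" unfolding d_def by simp
    have bL: "(\<Sum>v\<in>{v::'q list. length v = L}. if \<not> ?Lf v then ?bw v else 0) \<le> (1 - ?bw w)^M"
      using block_bound[OF cb wd, of cL M L] RB unfolding cL_def L_def by (simp add: algebra_simps)
    have bR: "(\<Sum>v\<in>{v::'q list. length v = L}. if \<not> ?Rt v then ?bw v else 0) \<le> (1 - ?bw w)^M"
      using block_bound[OF cb wd, of cR M L] RB unfolding cR_def L_def by (simp add: algebra_simps)
    have "\<exists>v. length v = L \<and> ?P v \<and> ?Lf v \<and> ?Rt v"
    proof (rule ccontr)
      assume N: "\<not> ?thesis"
      have "f n = (\<Sum>v\<in>{v::'q list. length v = L}. if ?P v then ?bw v else 0)"
        unfolding fsum L_def R_def by (simp add: mult.assoc)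
      also have "\<dots> \<le> (\<Sum>v\<in>{v::'q list. length v = L}. (if \<not> ?Lf v then ?bw v else 0) + (if \<not> ?Rt v then ?bw v else 0))"
        by (rule sum_mono) (use N bw_nonneg[OF cb] in auto)
      also have "\<dots> \<le> 2 * (1 - ?bw w)^M"
        unfolding sum.distrib using bL bR by simp
      also have "\<dots> < e" using M by simp
      finally have "f n < e" .
      moreover have "f n \<ge> 0" unfolding fsum by (rule sum_nonneg) (simp add: bw_nonneg[OF cb])
      ultimately show False using fe by simp
    qed
    then obtain v m1 m2 where v: "length v = L" "?P v" and m1: "m1 < M" "take (length w) (drop (cL + m1*d) v) = w"
      and m2: "m2 < M" "take (length w) (drop (cR + m2*d) v) = w" by blast
    define k1 where "k1 = (M - m1) * d"
    define k2 where "k2 = (m2 + 1) * d"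
    have k1b: "k1 \<in> {1..B}"
    proof -
      have "1 \<le> M - m1" "1 \<le> d" using m1 unfolding d_def by auto
      then have "1 \<le> (M - m1) * d" by (metis mult_le_mono nat_mult_1)
      moreover have "(M - m1) * d \<le> (M+1) * d" by (intro mult_right_mono) auto
      ultimately show ?thesis unfolding k1_def B_def by simp
    qed
    have k2b: "k2 \<in> {1..B}"
    proof -
      have "1 \<le> d" unfolding d_def by auto
      then have "1 \<le> (m2 + 1) * d" by simp
      moreover have "(m2 + 1) * d \<le> (M+1) * d" using m2 by (intro mult_right_mono) auto
      ultimately show ?thesis unfolding k2_def B_def by simp
    qed
    have k1R: "k1 + length w \<le> R"
    proof -
      have "k1 \<le> (M+1)*d" using k1b unfolding B_def by simp
      then show ?thesis using RB by simp
    qed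
    have k2R: "k2 + length w \<le> R"
    proof -
      have "k2 \<le> (M+1)*d" using k2b unfolding B_def by simp
      then show ?thesis using RB by simp
    qed
    have p1: "cL + m1*d = R - k1 - length w"
    proof -
      have "(M - m1) * d + m1 * d = M * d" using m1 by (simp add: add_mult_distrib[symmetric])
      then show ?thesis unfolding cL_def k1_def using RB by (simp add: algebra_simps)
    qed
    have p2: "cR + m2*d = R + length u + k2" unfolding cR_def k2_def by (simp add: algebra_simps)
    have vp: "v \<in> pattern_set (int R - int k1 - int (length w)) w (int k1 + int k2 + int (length u)) (int R - int k2 - int (length w))"
      by (rule pattern_mem[OF _ k1R k2R]) (use v m1 m2 p1 p2 L_def in auto)
    have vpre: "v \<in> preimage_words \<delta> r n u"
      unfolding preimage_words_def using v L_def R_def by (simp add: mult.assoc)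
    have "Good k1 k2 n" unfolding Good_def using vp vpre R_def by auto
    then show ?thesis using k1b k2b by blast
  qed
  define K where "K = {1..B} \<times> {1..B}"
  define G where "G k = {n. 0 < n \<and> Good (fst k) (snd k) n}" for k
  have "T \<subseteq> (\<Union>k\<in>K. G k)"
  proof
    fix n assume nT: "n \<in> T"
    then have "n > 0" unfolding T_def N0_def by auto
    with claim[OF nT] show "n \<in> (\<Union>k\<in>K. G k)" unfolding K_def G_def by force
  qed
  moreover have "finite K" unfolding K_def by simp
  ultimately obtain k where kK: "k \<in> K" and infG: "infinite (G k)"
    using infT finite_subset by (metis finite_UN)
  define n where "n = enumerate (G k)"
  have "strict_mono n" unfolding n_def by (rule strict_mono_enumerate[OF infG])
  moreover have "\<forall>j. n j \<in> G k" unfolding n_def using enumerate_in_set[OF infG] by blast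
  ultimately show ?thesis
    using kK unfolding K_def G_def Good_def by (intro exI[of _ "fst k"] exI[of _ "snd k"] exI[of _ n]) auto
qed

end
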